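(* Let the communication parameter be an integer $a\ge 2$ and suppose: (i) for every pair of distinct hypotheses $\theta_p,\theta_q\in\Theta$, the source set $\mathcal{S}(\theta_p,\theta_q)$ is non-empty; (ii) the directed graph $\mathcal{G}$ is strongly connected; (iii) $\pi_{i,0}(\theta)>0$ and $\mu_{i,0}(\theta)>0$ for all $i\in\mathcal{V}$ and all $\theta\in\Theta$. Then the learning rule (local Bayesian update plus time-triggered min-protocol, as described in the context) guarantees: (Consistency) for every agent $i\in\mathcal{V}$, $\mu_{i,t}(\theta^\star)\to 1$ almost surely (w.r.t. $\mathbb{P}^{\theta^\star}$); (Rate) for every agent $i\in\mathcal{V}$ and every false hypothesis $\theta\in\Theta\setminus\{\theta^\star\}$, $$\liminf_{t\to\infty}-\frac{\log \mu_{i,t}(\theta)}{t}\ \ge\ \max_{v\in\mathcal{S}(\theta^\star,\theta)}\frac{K_v(\theta^\star,\theta)}{a^{\,d(v,i)+1}}\quad\text{almost surely.}$$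
   Context: Agents $\mathcal{V}=\{1,\dots,n\}$ interact over a directed graph $\mathcal{G}=(\mathcal{V},\mathcal{E})$; an edge $(j,i)\in\mathcal{E}$ means $j$ can send information to $i$, and $\mathcal{N}_i=\{j:(j,i)\in\mathcal{E}\}$ is the set of (in-)neighbors of $i$. For a strongly connected $\mathcal{G}$, $d(i,j)$ is the length of a shortest directed path from $i$ to $j$ ($d(i,i)=0$), and $\bar d(\mathcal{G})=\max_{i,j}d(i,j)$ is the diameter. $\Theta=\{\theta_1,\dots,\theta_m\}$ is a finite set of hypotheses, and $\theta^\star\in\Theta$ is a fixed (unknown) true state. Each agent $i$ has a finite signal space $\mathcal{S}_i$; $\mathcal{S}=\mathcal{S}_1\times\cdots\times\mathcal{S}_n$. For each $\theta\in\Theta$ there is a joint likelihood $l(\cdot|\theta)$ on $\mathcal{S}$ whose $i$-th marginal $l_i(\cdot|\theta)$ is known to agent $i$, with $l_i(w_i|\theta)>0$ for all $w_i\in\mathcal{S}_i,\theta\in\Theta$. At each time $t\in\mathbb{N}_+$ the profile $s_t=(s_{1,t},\dots,s_{n,t})$ is drawn from $l(\cdot|\theta^\star)$, i.i.d. over time (possibly correlated across agents at a given time); agent $i$ observes $s_{i,t}$. The probability space is $\Omega=\{(s_1,s_2,\dots)\}$ with product measure $\mathbb{P}^{\theta^\star}=\prod_{t\ge1}l(\cdot|\theta^\star)$; "a.s." is w.r.t. $\mathbb{P}^{\theta^\star}$. $K_i(\theta_p,\theta_q)=D(l_i(\cdot|\theta_p)\,\|\,l_i(\cdot|\theta_q))$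 is the KL divergence. The source set is $\mathcal{S}(\theta_p,\theta_q)=\{i\in\mathcal{V}:K_i(\theta_p,\theta_q)>0\}$. Learning rule with parameter $a\in\mathbb{N}_+$: each agent keeps probability vectors $\boldsymbol\pi_{i,t}$ (local beliefs) and $\boldsymbol\mu_{i,t}$ (actual beliefs) on $\Theta$, initialized at $\boldsymbol\pi_{i,0},\boldsymbol\mu_{i,0}$. Let $\mathbb{I}=\{t_k\}_{k\in\mathbb{N}_+}$ with $t_1=1$ and $t_{k+1}-t_k=a^k$. For every $t\in\mathbb{N}$: $\pi_{i,t+1}(\theta)=\dfrac{l_i(s_{i,t+1}|\theta)\pi_{i,t}(\theta)}{\sum_{p=1}^m l_i(s_{i,t+1}|\theta_p)\pi_{i,t}(\theta_p)}$; if $t+1\in\mathbb{I}$: $\mu_{i,t+1}(\theta)=\dfrac{\min\{\{\mu_{j,t}(\theta)\}_{j\in\mathcal{N}_i},\pi_{i,t+1}(\theta)\}}{\sum_{p=1}^m\min\{\{\mu_{j,t}(\theta_p)\}_{j\in\mathcal{N}_i},\pi_{i,t+1}(\theta_p)\}}$; if $t+1\notin\mathbb{I}$: $\mu_{i,t+1}(\theta)=\mu_{i,t}(\theta)$. *)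

theory Defs
  imports "HOL-Probability.Probability" "HOL-Probability.Stream_Space"
begin

definition lik :: "('h \<Rightarrow> ('v \<Rightarrow> 's) pmf) \<Rightarrow> 'v \<Rightarrow> 'h \<Rightarrow> 's \<Rightarrow> real" where
  "lik l i th w = pmf (map_pmf (\<lambda>s. s i) (l th)) w"

definition KL :: "('h \<Rightarrow> ('v \<Rightarrow> 's) pmf) \<Rightarrow> ('v \<Rightarrow> 's set) \<Rightarrow> 'v \<Rightarrow> 'h \<Rightarrow> 'h \<Rightarrow> real" where
  "KL l Sig i p q = (\<Sum>w\<in>Sig i. lik l i p w * ln (lik l i p w / lik l i q w))"

definition source_set :: "('h \<Rightarrow> ('v \<Rightarrow> 's) pmf) \<Rightarrow> ('v \<Rightarrow> 's set) \<Rightarrow> 'h \<Rightarrow> 'h \<Rightarrow> 'v set" where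
  "source_set l Sig p q = {i. KL l Sig i p q > 0}"

(* in-neighbours: (j,i) \<in> E means j can send to i *)
definition nbrs :: "('v \<times> 'v) set \<Rightarrow> 'v \<Rightarrow> 'v set" where
  "nbrs E i = {j. (j, i) \<in> E}"

definition strongly_connected :: "('v::finite \<times> 'v) set \<Rightarrow> bool" where
  "strongly_connected E \<longleftrightarrow> (\<forall>i j. (i, j) \<in> E\<^sup>*)"

definition dist_graph :: "('v \<times> 'v) set \<Rightarrow> 'v \<Rightarrow> 'v \<Rightarrow> nat" where
  "dist_graph E i j = (LEAST k. (i, j) \<in> E ^^ k)"

(* triggering times: trig a k = t_{k+1}; t_1 = 1, t_{k+1} - t_k = a^k *)
fun trig :: "nat \<Rightarrow> nat \<Rightarrow> nat" where
  "trig a 0 = 1"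
| "trig a (Suc k) = trig a k + a ^ Suc k"

(* Joint state (local beliefs pi, actual beliefs mu) at time t along the signal path \<omega>;
   the signal profile s_t (t \<ge> 1) is \<omega> !! (t - 1). *)
fun beliefs :: "nat \<Rightarrow> ('v \<times> 'v) set \<Rightarrow> ('h::finite \<Rightarrow> ('v \<Rightarrow> 's) pmf)
    \<Rightarrow> ('v \<Rightarrow> 'h \<Rightarrow> real) \<Rightarrow> ('v \<Rightarrow> 'h \<Rightarrow> real) \<Rightarrow> ('v \<Rightarrow> 's) stream \<Rightarrow> nat
    \<Rightarrow> ('v \<Rightarrow> 'h \<Rightarrow> real) \<times> ('v \<Rightarrow> 'h \<Rightarrow> real)" where
  "beliefs a E l pi0 mu0 \<omega> 0 = (pi0, mu0)"
| "beliefs a E l pi0 mu0 \<omega> (Suc t) =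
     (let pi = fst (beliefs a E l pi0 mu0 \<omega> t);
          mu = snd (beliefs a E l pi0 mu0 \<omega> t);
          s = \<omega> !! t;
          pi' = (\<lambda>i th. lik l i th (s i) * pi i th / (\<Sum>p\<in>UNIV. lik l i p (s i) * pi i p));
          mn = (\<lambda>i th. Min (insert (pi' i th) ((\<lambda>j. mu j th) ` nbrs E i)));
          mu' = (if Suc t \<in> range (trig a)
                 then (\<lambda>i th. mn i th / (\<Sum>p\<in>UNIV. mn i p))
                 else mu)
      in (pi', mu'))"

definition loc_belief where
  "loc_belief a E l pi0 mu0 \<omega> t i th = fst (beliefs a E l pi0 mu0 \<omega> t) i th"

definition act_belief where
  "act_belief a E l pi0 mu0 \<omega> t i th = snd (beliefs a E l pi0 mu0 \<omega> t) i th"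

end

theory Submission
  imports Defs
begin


lemma exp_le_quad:
  fixes y :: real assumes "\<bar>y\<bar> \<le> 1" shows "exp y \<le> 1 + y + y^2"
proof (cases "y \<ge> 0")
  case True thus ?thesis using exp_bound[of y] assms by auto
next
  case False
  let ?u = "-y"
  have u: "0 < ?u" "?u \<le> 1" using False assms by auto
  have "exp (-?u) = 1 / exp ?u" by (simp add: exp_minus field_simps)
  also have "\<dots> \<le> 1 / (1 + ?u)" using u exp_ge_add_one_self[of ?u]
    by (intro divide_left_mono) auto
  also have "\<dots> \<le> 1 - ?u + ?u^2"
  proof -
    have "0 \<le> ?u * (?u * ?u)" using u by (intro mult_nonneg_nonneg) auto
    hence "1 \<le> (1 - ?u + ?u^2) * (1 + ?u)" by (simp add: algebra_simps power2_eq_square)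
    thus ?thesis using u by (simp add: field_simps)
  qed
  finally show ?thesis by (simp add: power2_eq_square)
qed

lemma mgf_bound:
  fixes p :: "'a pmf" and f :: "'a \<Rightarrow> real"
  assumes B: "\<And>x. x \<in> set_pmf p \<Longrightarrow> \<bar>f x\<bar> \<le> B" and lam: "0 \<le> lam" "lam * B \<le> 1"
  shows "measure_pmf.expectation p (\<lambda>x. exp (- lam * f x)) \<le> exp (- lam * measure_pmf.expectation p f + lam^2 * B^2)"
proof -
  have Bnn: "0 \<le> B" using B set_pmf_not_empty[of p] by (auto intro: order_trans[OF abs_ge_zero])
  have intf: "integrable (measure_pmf p) f"
    by (rule measure_pmf.integrable_const_bound[where B=B]) (auto simp: AE_measure_pmf_iff B)
  have bnd: "exp (- lam * f x) \<le> 1 - lam * f x + lam^2 * B^2" if x: "x \<in> set_pmf p" for x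
  proof -
    have fx: "\<bar>f x\<bar> \<le> B" using B x .
    have "\<bar>- lam * f x\<bar> \<le> lam * B" using lam fx by (simp add: abs_mult mult_left_mono)
    hence "\<bar>- lam * f x\<bar> \<le> 1" using lam by linarith
    hence "exp (- lam * f x) \<le> 1 + (- lam * f x) + (- lam * f x)^2" by (rule exp_le_quad)
    moreover have "(- lam * f x)^2 \<le> lam^2 * B^2"
    proof -
      have "(- lam * f x)^2 = (lam * \<bar>f x\<bar>)^2" using lam by (simp add: power2_eq_square abs_mult_self_eq)
      also have "\<dots> \<le> (lam * B)^2" using lam fx by (intro power_mono mult_left_mono) auto
      finally show ?thesis by (simp add: power_mult_distrib)
    qed
    ultimately show ?thesis by simp
  qed
  have ebnd: "norm (exp (- lam * f x)) \<le> exp (lam * B)" if x: "x \<in> set_pmf p" for x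
  proof -
    have "- lam * f x \<le> lam * \<bar>f x\<bar>" using lam mult_left_mono[of "- f x" "\<bar>f x\<bar>" lam] by simp
    also have "\<dots> \<le> lam * B" using lam B[OF x] by (simp add: mult_left_mono)
    finally have "- lam * f x \<le> lam * B" .
    thus ?thesis by simp
  qed
  have int2: "integrable (measure_pmf p) (\<lambda>x. exp (- lam * f x))"
    by (rule measure_pmf.integrable_const_bound[where B="exp (lam * B)"])
       (use ebnd in \<open>auto simp: AE_measure_pmf_iff\<close>)
  have "measure_pmf.expectation p (\<lambda>x. exp (- lam * f x)) \<le>
        measure_pmf.expectation p (\<lambda>x. 1 - lam * f x + lam^2 * B^2)"
    by (rule integral_mono_AE) (use bnd int2 intf in \<open>auto simp: AE_measure_pmf_iff\<close>)
  also have "\<dots> = 1 - lam * measure_pmf.expectation p f + lam^2 * B^2"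
    using intf by (simp add: Bochner_Integration.integral_add Bochner_Integration.integral_diff)
  also have "\<dots> \<le> exp (- lam * measure_pmf.expectation p f + lam^2 * B^2)"
    using exp_ge_add_one_self[of "- lam * measure_pmf.expectation p f + lam^2 * B^2"] by (simp add: algebra_simps)
  finally show ?thesis .
qed


lemma integrable_bounded_pmf:
  fixes p :: "'a pmf" and g :: "'a \<Rightarrow> real"
  assumes "\<And>x. x \<in> set_pmf p \<Longrightarrow> \<bar>g x\<bar> \<le> C"
  shows "integrable (measure_pmf p) g"
  by (rule measure_pmf.integrable_const_bound[where B=C]) (use assms in \<open>auto simp: AE_measure_pmf_iff\<close>)

lemma slln_lower:
  fixes p :: "'a pmf" and f :: "'a \<Rightarrow> real"
  assumes B: "\<And>x. x \<in> set_pmf p \<Longrightarrow> \<bar>f x\<bar> \<le> B" and eps: "\<epsilon> > 0"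
  shows "AE \<omega> in stream_space (measure_pmf p). eventually
     (\<lambda>n. real n * (measure_pmf.expectation p f - \<epsilon>) \<le> (\<Sum>\<tau><n. f (\<omega> !! \<tau>))) sequentially"
proof -
  have Bnn: "0 \<le> B" using B set_pmf_not_empty[of p] by (auto intro: order_trans[OF abs_ge_zero])
  define B' where "B' = B + 1"
  have B'pos: "B' > 0" using Bnn by (simp add: B'_def)
  have B': "\<And>x. x \<in> set_pmf p \<Longrightarrow> \<bar>f x\<bar> \<le> B'" using B by (force simp: B'_def)
  define \<mu> where "\<mu> = measure_pmf.expectation p f"
  define lam where "lam = min (1/B') (\<epsilon>/(2*B'^2))"
  have lampos: "lam > 0" using B'pos eps by (simp add: lam_def)
  have lamB: "lam * B' \<le> 1" using B'pos by (simp add: lam_def min_def field_simps)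
  have lamB2: "lam * B'^2 \<le> \<epsilon>/2"
  proof -
    have "lam \<le> \<epsilon>/(2*B'^2)" by (simp add: lam_def)
    hence "lam * B'^2 \<le> \<epsilon>/(2*B'^2) * B'^2" using B'pos by (intro mult_right_mono) auto
    thus ?thesis using B'pos by simp
  qed
  define m where "m = measure_pmf.expectation p (\<lambda>x. exp (- lam * f x))"
  have m_le: "m \<le> exp (- lam * \<mu> + lam^2 * B'^2)"
    unfolding m_def \<mu>_def by (rule mgf_bound[OF B']) (use lampos lamB in auto)
  have m_nn: "0 \<le> m" unfolding m_def by (rule integral_nonneg_AE) auto
  define \<rho> where "\<rho> = exp (lam * (\<mu> - \<epsilon>)) * m"
  have \<rho>_nn: "0 \<le> \<rho>" using m_nn by (simp add: \<rho>_def)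
  have "\<rho> \<le> exp (lam * (\<mu> - \<epsilon>)) * exp (- lam * \<mu> + lam^2 * B'^2)"
    unfolding \<rho>_def using m_le by (intro mult_left_mono) auto
  also have "\<dots> = exp (- lam * \<epsilon> + lam * (lam * B'^2))"
    by (subst mult_exp_exp) (simp add: algebra_simps power2_eq_square)
  also have "\<dots> \<le> exp (- lam * \<epsilon> + lam * (\<epsilon>/2))"
  proof -
    have h: "lam * (lam * B'^2) \<le> lam * (\<epsilon>/2)" by (rule mult_left_mono[OF lamB2]) (use lampos in simp)
    show ?thesis by (rule exp_mono) (use h in linarith)
  qed
  also have "\<dots> < 1" using lampos eps by simp
  finally have \<rho>_lt: "\<rho> < 1" .
  define S where "S n \<omega> = (\<Sum>\<tau><n. f (\<omega> !! \<tau>))" for n \<omega>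
  interpret SS: prob_space "stream_space (measure_pmf p)" by (rule prob_space.prob_space_stream_space[OF prob_space_measure_pmf])
  have fm[measurable]: "f \<in> borel_measurable (measure_pmf p)" by simp
  have Sm[measurable]: "S n \<in> borel_measurable (stream_space (measure_pmf p))" for n
    unfolding S_def by measurable
  have intexp: "integrable (measure_pmf p) (\<lambda>x. exp (- lam * f x))"
  proof (rule integrable_bounded_pmf)
    fix x assume x: "x \<in> set_pmf p"
    have "- lam * f x \<le> lam * \<bar>f x\<bar>" using lampos mult_left_mono[of "- f x" "\<bar>f x\<bar>" lam] by simp
    also have "\<dots> \<le> lam * B'" using lampos B'[OF x] by (simp add: mult_left_mono)
    finally show "\<bar>exp (- lam * f x)\<bar> \<le> exp (lam * B')" by simp
  qed
  have m_nn_int: "(\<integral>\<^sup>+x. ennreal (exp (- lam * f x)) \<partial>measure_pmf p) = ennreal m"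
    unfolding m_def by (rule nn_integral_eq_integral[OF intexp]) auto
  hence m_nn_int': "(\<integral>\<^sup>+x. ennreal (exp (- (lam * f x))) \<partial>measure_pmf p) = ennreal m" by simp
  have S_Suc: "S (Suc n) (x ## \<omega>) = f x + S n \<omega>" for n x \<omega>
    unfolding S_def by (subst sum.lessThan_Suc_shift) simp
  have nnS: "(\<integral>\<^sup>+\<omega>. ennreal (exp (- (lam * S n \<omega>))) \<partial>stream_space (measure_pmf p)) = ennreal m ^ n" for n
  proof (induction n)
    case 0
    then show ?case by (simp add: S_def SS.emeasure_space_1)
  next
    case (Suc n)
    have "(\<integral>\<^sup>+\<omega>. ennreal (exp (- (lam * S (Suc n) \<omega>))) \<partial>stream_space (measure_pmf p))
        = (\<integral>\<^sup>+x. (\<integral>\<^sup>+\<omega>. ennreal (exp (- (lam * S (Suc n) (x ## \<omega>)))) \<partial>stream_space (measure_pmf p)) \<partial>measure_pmf p)"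
      by (rule prob_space.nn_integral_stream_space[OF prob_space_measure_pmf]) measurable
    also have "\<dots> = (\<integral>\<^sup>+x. ennreal (exp (- (lam * f x))) * (\<integral>\<^sup>+\<omega>. ennreal (exp (- (lam * S n \<omega>))) \<partial>stream_space (measure_pmf p)) \<partial>measure_pmf p)"
      by (intro nn_integral_cong, subst nn_integral_cmult[symmetric])
         (auto simp: S_Suc algebra_simps mult_exp_exp ennreal_mult[symmetric] intro!: nn_integral_cong)
    also have "\<dots> = ennreal m * ennreal m ^ n"
      by (simp add: Suc nn_integral_multc m_nn_int')
    finally show ?case by simp
  qed
  define A where "A n = {\<omega> \<in> space (stream_space (measure_pmf p)). S n \<omega> < real n * (\<mu> - \<epsilon>)}" for n
  have A_sets[measurable]: "A n \<in> sets (stream_space (measure_pmf p))" for n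
    unfolding A_def by measurable
  have A_le: "measure (stream_space (measure_pmf p)) (A n) \<le> \<rho> ^ n" for n
  proof -
    have "emeasure (stream_space (measure_pmf p)) (A n) = (\<integral>\<^sup>+\<omega>. indicator (A n) \<omega> \<partial>stream_space (measure_pmf p))"
      by simp
    also have "\<dots> \<le> (\<integral>\<^sup>+\<omega>. ennreal (exp (lam * (real n * (\<mu> - \<epsilon>)))) * ennreal (exp (- (lam * S n \<omega>))) \<partial>stream_space (measure_pmf p))"
    proof (rule nn_integral_mono)
      fix \<omega>
      show "indicator (A n) \<omega> \<le> ennreal (exp (lam * (real n * (\<mu> - \<epsilon>)))) * ennreal (exp (- (lam * S n \<omega>)))"
      proof (cases "\<omega> \<in> A n")
        case True
        hence "S n \<omega> \<le> real n * (\<mu> - \<epsilon>)" by (simp add: A_def)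
        hence "lam * S n \<omega> \<le> lam * (real n * (\<mu> - \<epsilon>))" using lampos by (intro mult_left_mono) auto
        hence "0 \<le> lam * (real n * (\<mu> - \<epsilon>)) + (- (lam * S n \<omega>))" by linarith
        hence "1 \<le> exp (lam * (real n * (\<mu> - \<epsilon>))) * exp (- (lam * S n \<omega>))"
          by (simp add: mult_exp_exp)
        thus ?thesis using True by (simp add: ennreal_mult[symmetric])
      qed simp
    qed
    also have "\<dots> = ennreal (exp (lam * (real n * (\<mu> - \<epsilon>)))) * ennreal m ^ n"
      by (simp add: nn_integral_cmult nnS)
    also have "\<dots> = ennreal (\<rho> ^ n)"
    proof -
      have "exp (lam * (real n * (\<mu> - \<epsilon>))) = exp (lam * (\<mu> - \<epsilon>)) ^ n"
        by (subst exp_of_nat_mult[symmetric]) (simp add: algebra_simps)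
      thus ?thesis using m_nn by (simp add: \<rho>_def power_mult_distrib ennreal_mult[symmetric] ennreal_power)
    qed
    finally show ?thesis using \<rho>_nn
      by (simp add: SS.emeasure_eq_measure ennreal_le_iff)
  qed
  have summ: "summable (\<lambda>n. measure (stream_space (measure_pmf p)) (A n))"
    by (rule summable_comparison_test[OF _ summable_geometric[of \<rho>]])
       (use A_le \<rho>_nn \<rho>_lt in auto)
  have "AE \<omega> in stream_space (measure_pmf p). eventually (\<lambda>n. \<omega> \<in> space (stream_space (measure_pmf p)) - A n) sequentially"
    by (rule borel_cantelli_AE1[OF A_sets _ summ]) (simp add: SS.emeasure_finite less_top[symmetric])
  thus ?thesis
    by (rule AE_mp) (auto simp: A_def S_def \<mu>_def not_less elim!: eventually_mono)
qed




lemma trig_Suc': "trig a (Suc n) = a * trig a n + 1"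
proof (induction n)
  case 0 thus ?case by simp
next
  case (Suc n)
  have "trig a (Suc (Suc n)) = trig a (Suc n) + a * a ^ Suc n" by simp
  also have "\<dots> = a * trig a n + 1 + a * a ^ Suc n" using Suc by simp
  also have "\<dots> = a * (trig a n + a ^ Suc n) + 1" by (simp add: algebra_simps)
  finally show ?case by (simp only: trig.simps(2)[of a n])
qed

lemma trig_add: "trig a (n + Suc d) = a ^ Suc d * trig a n + trig a d"
proof (induction d)
  case 0 thus ?case using trig_Suc'[of a n] by simp
next
  case (Suc d)
  have "trig a (n + Suc (Suc d)) = a * trig a (n + Suc d) + 1" by (simp only: add_Suc_right trig_Suc')
  also have "\<dots> = a * (a ^ Suc d * trig a n + trig a d) + 1" by (simp only: Suc.IH)
  also have "\<dots> = a ^ Suc (Suc d) * trig a n + (a * trig a d + 1)" by (simp add: algebra_simps)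
  also have "a * trig a d + 1 = trig a (Suc d)" by (rule trig_Suc'[symmetric])
  finally show ?case .
qed

lemma trig_smono: assumes "a \<ge> 1" shows "strict_mono (trig a)"
  unfolding strict_mono_Suc_iff using assms by simp

lemma trig_ge1: "trig a k \<ge> 1"
  by (induction k) auto

lemma trig_between:
  assumes "a \<ge> 1" "1 \<le> t" shows "\<exists>k. trig a k \<le> t \<and> t < trig a (Suc k)"
proof -
  have sm: "strict_mono (trig a)" by (rule trig_smono[OF assms(1)])
  have h0: "a * a ^ t > 0" using assms(1) by simp
  have h1: "t \<le> trig a t" using seq_suble[OF sm, of t] .
  have h2: "trig a (Suc t) = trig a t + a * a ^ t" by simp
  have "t < trig a (Suc t)" using h0 h1 h2 by linarith
  hence ex: "\<exists>k. t < trig a k" by blast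
  define k where "k = (LEAST k. t < trig a k)"
  have k1: "t < trig a k" unfolding k_def by (rule LeastI_ex[OF ex])
  have k0: "k \<noteq> 0"
  proof
    assume "k = 0" thus False using k1 assms(2) by simp
  qed
  then obtain k' where kk: "k = Suc k'" by (cases k) auto
  have "\<not> t < trig a k'" using not_less_Least[of k' "\<lambda>k. t < trig a k"] kk k_def by simp
  hence "trig a k' \<le> t \<and> t < trig a (Suc k')" using k1 kk by simp
  thus ?thesis by blast
qed

lemma not_trig_between:
  assumes "a \<ge> 1" "trig a k < t" "t < trig a (Suc k)" shows "t \<notin> range (trig a)"
proof
  assume "t \<in> range (trig a)"
  then obtain m where m: "t = trig a m" by auto
  have sm: "strict_mono (trig a)" by (rule trig_smono[OF assms(1)])
  have "k < m" using assms(2) m sm by (simp add: strict_mono_less)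
  moreover have "m < Suc k" using assms(3) m strict_mono_less[OF sm, of m "Suc k"] by simp
  ultimately show False by simp
qed

lemma exists_const:
  fixes f :: "nat \<Rightarrow> 'i::finite \<Rightarrow> real"
  assumes pos: "\<And>t i. 0 < f t i" and b: "0 < b"
    and ev: "\<And>t i. T \<le> t \<Longrightarrow> b * exp (- \<epsilon> * real t) \<le> f t i"
  shows "\<exists>c>0. c \<le> 1 \<and> (\<forall>t i. c * exp (- \<epsilon> * real t) \<le> f t i)"
proof -
  define F where "F = (\<lambda>(t, i). f t i * exp (\<epsilon> * real t)) ` ({..<T} \<times> UNIV)"
  define c where "c = Min (insert 1 (insert b F))"
  have fin: "finite (insert 1 (insert b F))" by (simp add: F_def)
  have cpos: "0 < c" unfolding c_def using fin b pos by (subst Min_gr_iff) (auto simp: F_def)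
  have c1: "c \<le> 1" unfolding c_def using fin by (intro Min_le) auto
  have cb: "c \<le> b" unfolding c_def using fin by (intro Min_le) auto
  have cF: "c \<le> f t i * exp (\<epsilon> * real t)" if "t < T" for t i
    unfolding c_def using fin that by (intro Min_le) (auto simp: F_def)
  have "c * exp (- \<epsilon> * real t) \<le> f t i" for t i
  proof (cases "t < T")
    case True
    have "c * exp (- \<epsilon> * real t) \<le> f t i * exp (\<epsilon> * real t) * exp (- \<epsilon> * real t)"
      by (rule mult_right_mono[OF cF[OF True]]) simp
    also have "\<dots> = f t i" by (simp add: mult.assoc mult_exp_exp)
    finally show ?thesis .
  next
    case False
    have "c * exp (- \<epsilon> * real t) \<le> b * exp (- \<epsilon> * real t)" by (rule mult_right_mono[OF cb]) simp
    also have "\<dots> \<le> f t i" using False by (intro ev) simp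
    finally show ?thesis .
  qed
  thus ?thesis using cpos c1 by blast
qed

locale learn =
  fixes a :: nat
    and E :: "('v::finite \<times> 'v) set"
    and l :: "'h::finite \<Rightarrow> ('v \<Rightarrow> 's) pmf"
    and Sig :: "'v \<Rightarrow> 's set"
    and ts :: 'h
    and pi0 mu0 :: "'v \<Rightarrow> 'h \<Rightarrow> real"
  assumes a2: "a \<ge> 2"
    and Sig_fin: "\<And>i. finite (Sig i)"
    and supp: "\<And>th s i. s \<in> set_pmf (l th) \<Longrightarrow> s i \<in> Sig i"
    and lik_pos: "\<And>i th w. w \<in> Sig i \<Longrightarrow> lik l i th w > 0"
    and pi0_prob: "\<And>i. (\<Sum>th\<in>UNIV. pi0 i th) = 1"
    and mu0_prob: "\<And>i. (\<Sum>th\<in>UNIV. mu0 i th) = 1"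
    and conn: "strongly_connected E"
    and pi0_pos: "\<And>i th. pi0 i th > 0"
    and mu0_pos: "\<And>i th. mu0 i th > 0"
begin

declare beliefs.simps(2)[simp del]

abbreviation "P \<omega> t \<equiv> fst (beliefs a E l pi0 mu0 \<omega> t)"
abbreviation "U \<omega> t \<equiv> snd (beliefs a E l pi0 mu0 \<omega> t)"

definition X :: "'v \<Rightarrow> 'h \<Rightarrow> 's \<Rightarrow> real" where
  "X i p w = ln (lik l i ts w) - ln (lik l i p w)"

definition S :: "('v \<Rightarrow> 's) stream \<Rightarrow> nat \<Rightarrow> 'v \<Rightarrow> 'h \<Rightarrow> real" where
  "S \<omega> t i p = (\<Sum>\<tau><t. X i p ((\<omega> !! \<tau>) i))"

definition good :: "('v \<Rightarrow> 's) stream \<Rightarrow> bool" where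
  "good \<omega> \<longleftrightarrow> (\<forall>t. \<omega> !! t \<in> set_pmf (l ts))"

lemma a1: "a \<ge> 1" using a2 by simp

lemma sig: "good \<omega> \<Longrightarrow> (\<omega> !! t) i \<in> Sig i"
  unfolding good_def using supp by blast

lemma S_ts[simp]: "S \<omega> t i ts = 0"
  by (simp add: S_def X_def)

lemma S_Suc: "S \<omega> (Suc t) i p = S \<omega> t i p + X i p ((\<omega> !! t) i)"
  by (simp add: S_def)

lemma lik_X: "w \<in> Sig i \<Longrightarrow> lik l i p w = lik l i ts w * exp (- X i p w)"
  using lik_pos[of w i p] lik_pos[of w i ts]
  by (simp add: X_def exp_diff)

lemma P_Suc: "P \<omega> (Suc t) i th = lik l i th ((\<omega> !! t) i) * P \<omega> t i th /
     (\<Sum>p\<in>UNIV. lik l i p ((\<omega> !! t) i) * P \<omega> t i p)"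
  by (simp add: beliefs.simps(2) Let_def)

lemma P_formula:
  assumes g: "good \<omega>"
  shows "P \<omega> t i th = pi0 i th * exp (- S \<omega> t i th) / (\<Sum>p\<in>UNIV. pi0 i p * exp (- S \<omega> t i p))"
proof (induction t arbitrary: th)
  case 0
  then show ?case by (simp add: S_def pi0_prob)
next
  case (Suc t)
  define w where "w = (\<omega> !! t) i"
  have w: "w \<in> Sig i" unfolding w_def by (rule sig[OF g])
  define A where "A p = pi0 i p * exp (- S \<omega> t i p)" for p
  define A' where "A' p = pi0 i p * exp (- S \<omega> (Suc t) i p)" for p
  define Z where "Z = (\<Sum>p\<in>UNIV. A p)"
  define c where "c = lik l i ts w"
  have cpos: "c > 0" unfolding c_def using lik_pos[OF w] .
  have Apos: "A p > 0" for p unfolding A_def using pi0_pos by simp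
  have A'pos: "A' p > 0" for p unfolding A'_def using pi0_pos by simp
  have Zpos: "Z > 0" unfolding Z_def by (rule sum_pos) (auto intro: Apos)
  have Z'pos: "(\<Sum>p\<in>UNIV. A' p) > 0" by (rule sum_pos) (auto intro: A'pos)
  have key: "lik l i p w * A p = c * A' p" for p
    using lik_X[OF w, of p]
    by (simp add: A_def A'_def c_def S_Suc w_def exp_add[symmetric] algebra_simps exp_diff)
  have Pt: "P \<omega> t i p = A p / Z" for p using Suc.IH unfolding A_def Z_def .
  have "P \<omega> (Suc t) i th = lik l i th w * (A th / Z) / (\<Sum>p\<in>UNIV. lik l i p w * (A p / Z))"
    by (subst P_Suc) (simp add: Pt w_def)
  also have "(\<Sum>p\<in>UNIV. lik l i p w * (A p / Z)) = (\<Sum>p\<in>UNIV. lik l i p w * A p) / Z"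
    by (simp add: sum_divide_distrib)
  also have "(\<Sum>p\<in>UNIV. lik l i p w * A p) = c * (\<Sum>p\<in>UNIV. A' p)"
    by (simp add: key sum_distrib_left)
  also have "lik l i th w * (A th / Z) / (c * (\<Sum>p\<in>UNIV. A' p) / Z) = A' th / (\<Sum>p\<in>UNIV. A' p)"
    using key[of th] Zpos cpos Z'pos by (simp add: field_simps)
  finally show ?case unfolding A'_def .
qed

lemma P_pos: "good \<omega> \<Longrightarrow> P \<omega> t i th > 0"
  by (subst P_formula) (auto intro!: divide_pos_pos sum_pos simp: pi0_pos)

lemma P_sum: "good \<omega> \<Longrightarrow> (\<Sum>th\<in>UNIV. P \<omega> t i th) = 1"
proof -
  assume g: "good \<omega>"
  have "(\<Sum>p\<in>UNIV. pi0 i p * exp (- S \<omega> t i p)) > 0" by (intro sum_pos) (auto simp: pi0_pos)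
  thus ?thesis by (simp add: P_formula[OF g] sum_divide_distrib[symmetric])
qed

lemma P_upper: "good \<omega> \<Longrightarrow> P \<omega> t i th \<le> pi0 i th / pi0 i ts * exp (- S \<omega> t i th)"
proof -
  assume g: "good \<omega>"
  define Z where "Z = (\<Sum>p\<in>UNIV. pi0 i p * exp (- S \<omega> t i p))"
  have "pi0 i ts * exp (- S \<omega> t i ts) \<le> Z" unfolding Z_def
    by (rule member_le_sum) (auto intro: less_imp_le simp: pi0_pos)
  hence Z: "pi0 i ts \<le> Z" by simp
  have "P \<omega> t i th = pi0 i th * exp (- S \<omega> t i th) / Z" by (simp add: P_formula[OF g] Z_def)
  also have "\<dots> \<le> pi0 i th * exp (- S \<omega> t i th) / pi0 i ts"
    using Z pi0_pos[of i ts] pi0_pos[of i th] by (intro divide_left_mono) auto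
  finally show ?thesis by simp
qed

lemma P_lower:
  assumes g: "good \<omega>" and c: "\<And>p. - c \<le> S \<omega> t i p"
  shows "pi0 i ts * exp (- c) \<le> P \<omega> t i ts"
proof -
  define Z where "Z = (\<Sum>p\<in>UNIV. pi0 i p * exp (- S \<omega> t i p))"
  have Zpos: "Z > 0" unfolding Z_def by (intro sum_pos) (auto simp: pi0_pos)
  have ec: "exp (- S \<omega> t i p) \<le> exp c" for p using c[of p] by simp
  have "Z \<le> (\<Sum>p\<in>UNIV. pi0 i p * exp c)" unfolding Z_def
    by (intro sum_mono mult_left_mono ec) (auto intro: less_imp_le pi0_pos)
  also have "\<dots> = exp c" by (simp add: sum_distrib_right[symmetric] pi0_prob)
  finally have Z: "Z \<le> exp c" .
  have "pi0 i ts * exp (- c) = pi0 i ts / exp c" by (simp add: exp_minus field_simps)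
  also have "\<dots> \<le> pi0 i ts / Z" using Z Zpos pi0_pos[of i ts] by (intro divide_left_mono) auto
  also have "\<dots> = P \<omega> t i ts" by (simp add: P_formula[OF g] Z_def)
  finally show ?thesis .
qed

definition mn :: "('v \<Rightarrow> 's) stream \<Rightarrow> nat \<Rightarrow> 'v \<Rightarrow> 'h \<Rightarrow> real" where
  "mn \<omega> t i th = Min (insert (P \<omega> (Suc t) i th) ((\<lambda>j. U \<omega> t j th) ` nbrs E i))"

lemma U_trig: "Suc t \<in> range (trig a) \<Longrightarrow> U \<omega> (Suc t) i th = mn \<omega> t i th / (\<Sum>p\<in>UNIV. mn \<omega> t i p)"
  unfolding mn_def by (simp add: beliefs.simps(2) Let_def)

lemma U_nontrig: "Suc t \<notin> range (trig a) \<Longrightarrow> U \<omega> (Suc t) = U \<omega> t"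
  by (simp add: beliefs.simps(2) Let_def)

lemma U_0: "U \<omega> 0 = mu0" by simp

lemma mn_le_P: "mn \<omega> t i th \<le> P \<omega> (Suc t) i th"
  unfolding mn_def by (rule Min_le) auto

lemma mn_le_U: "j \<in> nbrs E i \<Longrightarrow> mn \<omega> t i th \<le> U \<omega> t j th"
  unfolding mn_def by (rule Min_le) auto

lemma mn_ge: "m \<le> P \<omega> (Suc t) i th \<Longrightarrow> (\<And>j. m \<le> U \<omega> t j th) \<Longrightarrow> m \<le> mn \<omega> t i th"
  unfolding mn_def by (subst Min_ge_iff) auto

lemma mn_pos: "good \<omega> \<Longrightarrow> (\<And>j. U \<omega> t j th > 0) \<Longrightarrow> mn \<omega> t i th > 0"
  unfolding mn_def by (subst Min_gr_iff) (auto intro: P_pos)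

lemma mn_sum_le: "good \<omega> \<Longrightarrow> (\<Sum>p\<in>UNIV. mn \<omega> t i p) \<le> 1"
proof -
  assume g: "good \<omega>"
  have "(\<Sum>p\<in>UNIV. mn \<omega> t i p) \<le> (\<Sum>p\<in>UNIV. P \<omega> (Suc t) i p)"
    by (intro sum_mono mn_le_P)
  also have "\<dots> = 1" by (rule P_sum[OF g])
  finally show ?thesis .
qed

lemma U_pos_sum: "good \<omega> \<Longrightarrow> (\<forall>i th. U \<omega> t i th > 0) \<and> (\<forall>i. (\<Sum>th\<in>UNIV. U \<omega> t i th) = 1)"
proof (induction t)
  case 0
  then show ?case by (simp add: mu0_pos mu0_prob)
next
  case (Suc t)
  show ?case
  proof (cases "Suc t \<in> range (trig a)")
    case True
    have mp: "mn \<omega> t i th > 0" for i th using mn_pos[OF Suc.prems] Suc by blast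
    have sp: "(\<Sum>p\<in>UNIV. mn \<omega> t i p) > 0" for i by (intro sum_pos) (auto intro: mp)
    show ?thesis
    proof (intro conjI allI)
      fix i th show "U \<omega> (Suc t) i th > 0" using mp[of i th] sp[of i] by (simp add: U_trig[OF True])
    next
      fix i show "(\<Sum>th\<in>UNIV. U \<omega> (Suc t) i th) = 1"
        using sp[of i] by (simp add: U_trig[OF True] sum_divide_distrib[symmetric])
    qed
  next
    case False
    then show ?thesis using Suc by (simp add: U_nontrig[OF False])
  qed
qed

lemma U_pos: "good \<omega> \<Longrightarrow> U \<omega> t i th > 0" using U_pos_sum by blast
lemma U_sum: "good \<omega> \<Longrightarrow> (\<Sum>th\<in>UNIV. U \<omega> t i th) = 1" using U_pos_sum by blast

lemma U_le1: "good \<omega> \<Longrightarrow> U \<omega> t i th \<le> 1"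
proof -
  assume g: "good \<omega>"
  have "U \<omega> t i th \<le> (\<Sum>p\<in>UNIV. U \<omega> t i p)"
    by (rule member_le_sum) (auto intro: less_imp_le U_pos[OF g])
  thus ?thesis using U_sum[OF g] by simp
qed

lemma U_trig_lower: "good \<omega> \<Longrightarrow> Suc t \<in> range (trig a) \<Longrightarrow> mn \<omega> t i th \<le> U \<omega> (Suc t) i th"
proof -
  assume g: "good \<omega>" and tr: "Suc t \<in> range (trig a)"
  have mp: "mn \<omega> t i p > 0" for p using mn_pos[OF g] U_pos[OF g] by blast
  have sp: "(\<Sum>p\<in>UNIV. mn \<omega> t i p) > 0" by (intro sum_pos) (auto intro: mp)
  have "mn \<omega> t i th / 1 \<le> mn \<omega> t i th / (\<Sum>p\<in>UNIV. mn \<omega> t i p)"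
    using mp[of th] sp mn_sum_le[OF g, of t i] by (intro divide_left_mono) auto
  thus ?thesis by (simp add: U_trig[OF tr])
qed

lemma U_trig_upper: "good \<omega> \<Longrightarrow> Suc t \<in> range (trig a) \<Longrightarrow> U \<omega> (Suc t) i th \<le> mn \<omega> t i th / mn \<omega> t i ts"
proof -
  assume g: "good \<omega>" and tr: "Suc t \<in> range (trig a)"
  have mp: "mn \<omega> t i p > 0" for p using mn_pos[OF g] U_pos[OF g] by blast
  have "mn \<omega> t i ts \<le> (\<Sum>p\<in>UNIV. mn \<omega> t i p)"
    by (rule member_le_sum) (auto intro: less_imp_le mp)
  hence "mn \<omega> t i th / (\<Sum>p\<in>UNIV. mn \<omega> t i p) \<le> mn \<omega> t i th / mn \<omega> t i ts"
    using mp[of th] mp[of ts] by (intro divide_left_mono) auto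
  thus ?thesis by (simp add: U_trig[OF tr])
qed

lemma U_lower:
  assumes g: "good \<omega>" and c: "0 < c" and e: "0 \<le> \<epsilon>"
    and Pb: "\<And>t i. c * exp (- \<epsilon> * real t) \<le> P \<omega> t i ts"
    and m0: "\<And>i. c \<le> mu0 i ts"
  shows "c * exp (- \<epsilon> * real t) \<le> U \<omega> t i ts"
proof (induction t arbitrary: i)
  case 0
  then show ?case using m0 by simp
next
  case (Suc t)
  have mono: "c * exp (- \<epsilon> * real (Suc t)) \<le> c * exp (- \<epsilon> * real t)"
    using c e by (intro mult_left_mono) (auto simp: mult_left_mono)
  show ?case
  proof (cases "Suc t \<in> range (trig a)")
    case True
    have "c * exp (- \<epsilon> * real (Suc t)) \<le> mn \<omega> t i ts"
      by (rule mn_ge[OF Pb]) (use Suc.IH mono in \<open>blast intro: order_trans\<close>)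
    also have "\<dots> \<le> U \<omega> (Suc t) i ts" by (rule U_trig_lower[OF g True])
    finally show ?thesis .
  next
    case False
    then show ?thesis using Suc.IH[of i] mono by (simp add: U_nontrig[OF False])
  qed
qed

lemma U_const:
  assumes "trig a k \<le> t" "t < trig a (Suc k)"
  shows "U \<omega> t = U \<omega> (trig a k)"
proof -
  have "trig a k + j < trig a (Suc k) \<longrightarrow> U \<omega> (trig a k + j) = U \<omega> (trig a k)" for j
  proof (induction j)
    case 0 thus ?case by simp
  next
    case (Suc j)
    show ?case
    proof
      assume h: "trig a k + Suc j < trig a (Suc k)"
      have "Suc (trig a k + j) \<notin> range (trig a)"
        by (rule not_trig_between[OF a1, of k]) (use h in auto)
      thus "U \<omega> (trig a k + Suc j) = U \<omega> (trig a k)"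
        using Suc h by (simp add: U_nontrig)
    qed
  qed
  from this[of "t - trig a k"] assms show ?thesis by simp
qed

lemma trig_step_upper:
  assumes g: "good \<omega>" and c: "0 < c" and e: "0 \<le> \<epsilon>"
    and Pb: "\<And>t i. c * exp (- \<epsilon> * real t) \<le> P \<omega> t i ts"
    and Ub: "\<And>t i. c * exp (- \<epsilon> * real t) \<le> U \<omega> t i ts"
    and tr: "Suc t \<in> range (trig a)"
  shows "U \<omega> (Suc t) i th \<le> exp (\<epsilon> * real (Suc t)) / c * mn \<omega> t i th"
proof -
  have mono: "c * exp (- \<epsilon> * real (Suc t)) \<le> c * exp (- \<epsilon> * real t)"
    using c e by (intro mult_left_mono) (auto simp: mult_left_mono)
  have lb: "c * exp (- \<epsilon> * real (Suc t)) \<le> mn \<omega> t i ts"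
    by (rule mn_ge[OF Pb]) (use Ub mono in \<open>blast intro: order_trans\<close>)
  have lbp: "0 < c * exp (- \<epsilon> * real (Suc t))" using c by simp
  have mp: "0 < mn \<omega> t i th" using mn_pos[OF g] U_pos[OF g] by blast
  have "U \<omega> (Suc t) i th \<le> mn \<omega> t i th / mn \<omega> t i ts" by (rule U_trig_upper[OF g tr])
  also have "\<dots> \<le> mn \<omega> t i th / (c * exp (- \<epsilon> * real (Suc t)))"
    using lb lbp mp by (intro divide_left_mono) auto
  also have "\<dots> = exp (\<epsilon> * real (Suc t)) / c * mn \<omega> t i th"
    using c by (simp add: exp_minus field_simps mult_exp_exp)
  finally show ?thesis .
qed

lemma path_bound:
  assumes g: "good \<omega>" and c: "0 < c" and e: "0 \<le> \<epsilon>"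
    and Pb: "\<And>t i. c * exp (- \<epsilon> * real t) \<le> P \<omega> t i ts"
    and Ub: "\<And>t i. c * exp (- \<epsilon> * real t) \<le> U \<omega> t i ts"
  shows "(v, i) \<in> E ^^ d \<Longrightarrow> d \<le> k \<Longrightarrow>
    U \<omega> (trig a k) i th \<le> (exp (\<epsilon> * real (trig a k)) / c) ^ Suc d * P \<omega> (trig a (k - d)) v th"
proof (induction d arbitrary: i k)
  case 0
  hence vi: "v = i" by simp
  define t0 where "t0 = trig a k - 1"
  have st: "Suc t0 = trig a k" using trig_ge1[of a k] by (simp add: t0_def)
  have tr: "Suc t0 \<in> range (trig a)" using st by auto
  have Cnn: "0 \<le> exp (\<epsilon> * real (Suc t0)) / c" using c by simp
  have "U \<omega> (Suc t0) i th \<le> exp (\<epsilon> * real (Suc t0)) / c * mn \<omega> t0 i th"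
    by (rule trig_step_upper[OF g c e Pb Ub tr])
  also have "\<dots> \<le> exp (\<epsilon> * real (Suc t0)) / c * P \<omega> (Suc t0) i th"
    by (rule mult_left_mono[OF mn_le_P Cnn])
  finally show ?case using vi st by simp
next
  case (Suc d)
  from Suc.prems(1) obtain j where vj: "(v, j) \<in> E ^^ d" and ji: "(j, i) \<in> E" by (rule relpow_Suc_E)
  from Suc.prems(2) obtain k' where kk: "k = Suc k'" and dk: "d \<le> k'" by (cases k) auto
  define t0 where "t0 = trig a k - 1"
  have st: "Suc t0 = trig a k" using trig_ge1[of a k] by (simp add: t0_def)
  have tr: "Suc t0 \<in> range (trig a)" using st by auto
  define C where "C = exp (\<epsilon> * real (trig a k)) / c"
  define C' where "C' = exp (\<epsilon> * real (trig a k')) / c"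
  have Cnn: "0 \<le> C" using c by (simp add: C_def)
  have C'nn: "0 \<le> C'" using c by (simp add: C'_def)
  have CC: "C' \<le> C" unfolding C_def C'_def using c e
    by (intro divide_right_mono) (auto intro!: mult_left_mono simp: kk)
  have pa: "0 < a * a ^ k'" using a1 by simp
  have tk: "trig a k = trig a k' + a * a ^ k'" using kk by simp
  have t0b1: "trig a k' \<le> t0" using tk pa unfolding t0_def by arith
  have t0b2: "t0 < trig a (Suc k')" using kk trig_ge1[of a k] unfolding t0_def by simp
  note t0b = t0b1 t0b2
  have "U \<omega> (trig a k) i th \<le> C * mn \<omega> t0 i th"
    using trig_step_upper[OF g c e Pb Ub tr, of i th] st by (simp add: C_def)
  also have "\<dots> \<le> C * U \<omega> t0 j th"
    by (rule mult_left_mono[OF mn_le_U Cnn]) (use ji in \<open>simp add: nbrs_def\<close>)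
  also have "U \<omega> t0 j th = U \<omega> (trig a k') j th" using U_const[OF t0b] by simp
  also have "C * \<dots> \<le> C * (C' ^ Suc d * P \<omega> (trig a (k' - d)) v th)"
    by (rule mult_left_mono[OF _ Cnn]) (use Suc.IH[OF vj dk] in \<open>simp add: C'_def\<close>)
  also have "\<dots> \<le> C * (C ^ Suc d * P \<omega> (trig a (k' - d)) v th)"
    using CC C'nn Cnn P_pos[OF g, of "trig a (k' - d)" v th]
    by (intro mult_left_mono mult_right_mono power_mono) auto
  also have "\<dots> = C ^ Suc (Suc d) * P \<omega> (trig a (k - Suc d)) v th" by (simp add: kk)
  finally show ?case by (simp add: C_def)
qed

lemma lik_sum: "(\<Sum>w\<in>Sig i. lik l i th w) = 1"
  unfolding lik_def by (rule sum_pmf_eq_1[OF Sig_fin]) (auto intro: supp)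

lemma KL_nonneg: "0 \<le> KL l Sig i ts p"
proof -
  have tm: "lik l i ts w - lik l i p w \<le> lik l i ts w * ln (lik l i ts w / lik l i p w)" if w: "w \<in> Sig i" for w
  proof -
    define q r where "q = lik l i ts w" and "r = lik l i p w"
    have q: "0 < q" and r: "0 < r" using lik_pos[OF w] by (auto simp: q_def r_def)
    have "ln (r / q) \<le> r / q - 1" using q r by (intro ln_le_minus_one) auto
    moreover have "ln (q / r) = - ln (r / q)" using q r by (simp add: ln_div)
    ultimately have "1 - r / q \<le> ln (q / r)" by simp
    hence "q * (1 - r / q) \<le> q * ln (q / r)" using q by (intro mult_left_mono) auto
    thus ?thesis using q by (simp add: q_def r_def field_simps)
  qed
  have "0 = (\<Sum>w\<in>Sig i. lik l i ts w - lik l i p w)" by (simp add: sum_subtractf lik_sum)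
  also have "\<dots> \<le> KL l Sig i ts p" unfolding KL_def by (intro sum_mono tm)
  finally show ?thesis .
qed

lemma KL_expect: "measure_pmf.expectation (l ts) (\<lambda>s. X i p (s i)) = KL l Sig i ts p"
proof -
  have "measure_pmf.expectation (l ts) (\<lambda>s. X i p (s i)) =
        measure_pmf.expectation (map_pmf (\<lambda>s. s i) (l ts)) (X i p)" by simp
  also have "\<dots> = (\<Sum>w\<in>Sig i. pmf (map_pmf (\<lambda>s. s i) (l ts)) w *\<^sub>R X i p w)"
    by (rule integral_measure_pmf[OF Sig_fin]) (auto intro: supp)
  also have "\<dots> = KL l Sig i ts p" unfolding KL_def
  proof (intro sum.cong refl)
    fix w assume w: "w \<in> Sig i"
    show "pmf (map_pmf (\<lambda>s. s i) (l ts)) w *\<^sub>R X i p w = lik l i ts w * ln (lik l i ts w / lik l i p w)"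
      using lik_pos[OF w, of ts] lik_pos[OF w, of p] by (simp add: X_def lik_def ln_div)
  qed
  finally show ?thesis .
qed

lemma X_bound: "w \<in> Sig i \<Longrightarrow> \<bar>X i p w\<bar> \<le> (\<Sum>w'\<in>Sig i. \<bar>X i p w'\<bar>)"
  by (rule member_le_sum[OF _ _ Sig_fin]) auto

definition H :: "('v \<Rightarrow> 's) stream \<Rightarrow> bool" where
  "H \<omega> \<longleftrightarrow> (\<forall>(m::nat) i p. \<exists>N. \<forall>n\<ge>N. real n * (KL l Sig i ts p - 1 / (real m + 1)) \<le> S \<omega> n i p)"

lemma rate_det:
  assumes g: "good \<omega>" and Hw: "H \<omega>" and vi: "(v, i) \<in> E ^^ d"
    and y: "y < KL l Sig v ts th / real a ^ Suc d"
  shows "\<exists>N. \<forall>t\<ge>N. y < - ln (U \<omega> t i th) / real t"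
proof (cases "y < 0")
  case True
  have "y < - ln (U \<omega> t i th) / real t" for t
  proof -
    have "ln (U \<omega> t i th) \<le> 0" using U_pos[OF g] U_le1[OF g] by simp
    hence "0 \<le> - ln (U \<omega> t i th) / real t" by (simp add: divide_nonpos_nonneg)
    thus ?thesis using True by linarith
  qed
  thus ?thesis by blast
next
  case False
  define K where "K = KL l Sig v ts th"
  define A where "A = real a ^ Suc d"
  have A1: "1 \<le> A" unfolding A_def using a1 by (intro one_le_power) simp
  have Apos: "0 < A" using A1 by simp
  have K0: "0 \<le> K" unfolding K_def by (rule KL_nonneg)
  have gap: "0 < K / A - y" using y by (simp add: K_def A_def)
  obtain n where n: "0 < n" "inverse (real n) < (K / A - y) / (real d + 4)"
    using ex_inverse_of_nat_less[of "(K / A - y) / (real d + 4)"] gap by auto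
  define m where "m = n - 1"
  define \<epsilon> where "\<epsilon> = 1 / (real m + 1)"
  have \<epsilon>n: "\<epsilon> = inverse (real n)" using n(1) by (simp add: \<epsilon>_def m_def of_nat_diff inverse_eq_divide)
  have \<epsilon>pos: "0 < \<epsilon>" using n(1) by (simp add: \<epsilon>n)
  have \<epsilon>gap: "(real d + 3) * \<epsilon> < K / A - y"
  proof -
    have "\<epsilon> * (real d + 4) < K / A - y" using n(2) by (simp add: \<epsilon>n pos_less_divide_eq)
    thus ?thesis using \<epsilon>pos by (simp add: algebra_simps)
  qed
  have KA: "K / A \<le> K" using K0 A1 by (simp add: divide_le_eq mult_le_cancel_left1 mult_le_cancel_left)
  have \<kappa>0: "0 \<le> K - \<epsilon>"
  proof -
    have "0 \<le> real d * \<epsilon>" using \<epsilon>pos by simp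
    moreover have "(real d + 3) * \<epsilon> = real d * \<epsilon> + 3 * \<epsilon>" by (simp add: algebra_simps)
    ultimately show ?thesis using \<epsilon>gap KA False \<epsilon>pos by linarith
  qed
  have Hm: "\<And>i' p. \<exists>N. \<forall>t\<ge>N. real t * (KL l Sig i' ts p - \<epsilon>) \<le> S \<omega> t i' p"
    using Hw unfolding H_def \<epsilon>_def by blast
  have low1: "eventually (\<lambda>t. - \<epsilon> * real t \<le> S \<omega> t i' p) sequentially" for i' p
  proof -
    obtain N where N: "\<forall>t\<ge>N. real t * (KL l Sig i' ts p - \<epsilon>) \<le> S \<omega> t i' p" using Hm by blast
    have "- \<epsilon> * real t \<le> S \<omega> t i' p" if "t \<ge> N" for t
    proof -
      have "- \<epsilon> * real t \<le> real t * (KL l Sig i' ts p - \<epsilon>)"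
        using KL_nonneg[of i' p] by (simp add: algebra_simps)
      moreover have "real t * (KL l Sig i' ts p - \<epsilon>) \<le> S \<omega> t i' p" using N that by blast
      ultimately show ?thesis by linarith
    qed
    thus ?thesis unfolding eventually_sequentially by blast
  qed
  have "eventually (\<lambda>t. \<forall>i'. \<forall>p. - \<epsilon> * real t \<le> S \<omega> t i' p) sequentially"
    by (intro eventually_all_finite low1)
  then obtain T where T: "\<And>t i' p. t \<ge> T \<Longrightarrow> - \<epsilon> * real t \<le> S \<omega> t i' p"
    unfolding eventually_sequentially by blast
  define b where "b = Min (range (\<lambda>i'. pi0 i' ts))"
  have bpos: "0 < b" unfolding b_def by (subst Min_gr_iff) (auto intro: pi0_pos)
  have ble: "b \<le> pi0 i' ts" for i' unfolding b_def by (rule Min_le) auto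
  have Pev: "b * exp (- \<epsilon> * real t) \<le> P \<omega> t i' ts" if "T \<le> t" for t i'
  proof -
    have "pi0 i' ts * exp (- (\<epsilon> * real t)) \<le> P \<omega> t i' ts"
      by (rule P_lower[OF g]) (use T[OF that] in simp)
    moreover have "b * exp (- (\<epsilon> * real t)) \<le> pi0 i' ts * exp (- (\<epsilon> * real t))"
      using ble[of i'] by (intro mult_right_mono) auto
    ultimately have "b * exp (- (\<epsilon> * real t)) \<le> P \<omega> t i' ts" by linarith
    thus ?thesis by simp
  qed
  obtain c0 where c0: "0 < c0" "c0 \<le> 1" "\<And>t i'. c0 * exp (- \<epsilon> * real t) \<le> P \<omega> t i' ts"
    using exists_const[of "\<lambda>t i'. P \<omega> t i' ts" b T \<epsilon>] P_pos[OF g] bpos Pev by blast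
  define c where "c = min c0 (Min (range (\<lambda>i'. mu0 i' ts)))"
  have mpos: "0 < Min (range (\<lambda>i'. mu0 i' ts))" by (subst Min_gr_iff) (auto intro: mu0_pos)
  have cpos: "0 < c" unfolding c_def using c0(1) mpos by simp
  have cle1: "c \<le> 1" unfolding c_def using c0(2) by simp
  have cmu: "c \<le> mu0 i' ts" for i'
  proof -
    have "Min (range (\<lambda>i'. mu0 i' ts)) \<le> mu0 i' ts" by (rule Min_le) auto
    thus ?thesis unfolding c_def by (meson min.cobounded2 order_trans)
  qed
  have Pb: "c * exp (- \<epsilon> * real t) \<le> P \<omega> t i' ts" for t i'
  proof -
    have "c * exp (- \<epsilon> * real t) \<le> c0 * exp (- \<epsilon> * real t)"
      unfolding c_def by (intro mult_right_mono) auto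
    thus ?thesis using c0(3)[of t i'] by linarith
  qed
  have Ub: "c * exp (- \<epsilon> * real t) \<le> U \<omega> t i' ts" for t i'
    by (rule U_lower[OF g cpos _ Pb cmu]) (use \<epsilon>pos in simp)
  obtain T1 where T1: "\<And>t. t \<ge> T1 \<Longrightarrow> real t * (K - \<epsilon>) \<le> S \<omega> t v th"
    using Hm[of v th] unfolding K_def by blast
  define R where "R = pi0 v th / pi0 v ts"
  have Rpos: "0 < R" unfolding R_def using pi0_pos by simp
  define Td where "Td = real (trig a d)"
  define D1 where "D1 = real (Suc d)"
  define Cst where "Cst = (K - \<epsilon>) * Td / A - D1 * ln c + ln R"
  define N where "N = max (max 1 (trig a (d + T1))) (nat \<lceil>\<bar>Cst\<bar> / \<epsilon>\<rceil>)"
  have sm: "strict_mono (trig a)" by (rule trig_smono[OF a1])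
  show ?thesis
  proof (intro exI allI impI)
    fix t assume tN: "N \<le> t"
    have t1: "1 \<le> t" using tN by (simp add: N_def)
    have tT: "trig a (d + T1) \<le> t" using tN by (simp add: N_def)
    have tC: "\<bar>Cst\<bar> / \<epsilon> \<le> real t"
    proof -
      have "nat \<lceil>\<bar>Cst\<bar> / \<epsilon>\<rceil> \<le> t" using tN by (simp add: N_def)
      thus ?thesis by linarith
    qed
    obtain k where k: "trig a k \<le> t" "t < trig a (Suc k)" using trig_between[OF a1 t1] by blast
    have kd: "d + T1 \<le> k"
    proof (rule ccontr)
      assume "\<not> d + T1 \<le> k"
      hence "Suc k \<le> d + T1" by simp
      hence "trig a (Suc k) \<le> trig a (d + T1)" using strict_mono_less_eq[OF sm] by blast
      thus False using k(2) tT by simp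
    qed
    define tp where "tp = trig a (k - d)"
    have tpT: "T1 \<le> tp" using seq_suble[OF sm, of "k - d"] kd by (simp add: tp_def)
    have split: "trig a (Suc k) = a ^ Suc d * tp + trig a d"
      using trig_add[of a "k - d" d] kd by (simp add: tp_def)
    have F1: "real t < A * real tp + Td"
    proof -
      have "t < a ^ Suc d * tp + trig a d" using k(2) split by simp
      hence "real t < real (a ^ Suc d * tp + trig a d)" by linarith
      thus ?thesis by (simp add: A_def Td_def)
    qed
    have F2: "real (trig a k) \<le> real t" using k(1) by simp
    define C where "C = exp (\<epsilon> * real (trig a k)) / c"
    have Cpos: "0 < C" using cpos by (simp add: C_def)
    have Ueq: "U \<omega> t i th = U \<omega> (trig a k) i th" using U_const[OF k] by simp
    have U1: "U \<omega> t i th \<le> C ^ Suc d * P \<omega> tp v th"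
      unfolding Ueq C_def tp_def by (rule path_bound[OF g cpos _ Pb Ub vi]) (use \<epsilon>pos kd in auto)
    have P1: "P \<omega> tp v th \<le> R * exp (- ((K - \<epsilon>) * real tp))"
    proof -
      have "P \<omega> tp v th \<le> R * exp (- S \<omega> tp v th)" using P_upper[OF g] by (simp add: R_def)
      also have "\<dots> \<le> R * exp (- ((K - \<epsilon>) * real tp))"
        using T1[OF tpT] Rpos by (intro mult_left_mono) (auto simp: algebra_simps)
      finally show ?thesis .
    qed
    define Bd where "Bd = C ^ Suc d * (R * exp (- ((K - \<epsilon>) * real tp)))"
    have Bdpos: "0 < Bd" using Cpos Rpos by (simp add: Bd_def)
    have UB: "U \<omega> t i th \<le> Bd" unfolding Bd_def
      using U1 P1 Cpos by (meson order_trans mult_left_mono zero_le_power less_imp_le)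
    have lnUB: "ln (U \<omega> t i th) \<le> ln Bd" using UB U_pos[OF g] Bdpos by simp
    have lnBd: "ln Bd = D1 * (\<epsilon> * real (trig a k) - ln c) + ln R - (K - \<epsilon>) * real tp"
      using Cpos Rpos cpos by (simp add: Bd_def ln_mult ln_realpow C_def ln_div D1_def algebra_simps)
    have F3: "(K - \<epsilon>) * real tp - D1 * (\<epsilon> * real (trig a k) - ln c) - ln R \<le> - ln (U \<omega> t i th)"
      using lnUB lnBd by linarith
    have G1: "(K - \<epsilon>) * (real t - Td) \<le> (K - \<epsilon>) * (A * real tp)"
      using F1 \<kappa>0 by (intro mult_left_mono) auto
    have G1': "(K - \<epsilon>) * (real t - Td) / A \<le> (K - \<epsilon>) * real tp"
    proof -
      have "(K - \<epsilon>) * (real t - Td) / A \<le> (K - \<epsilon>) * (A * real tp) / A"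
        using G1 Apos by (intro divide_right_mono) auto
      also have "\<dots> = (K - \<epsilon>) * real tp" using Apos by simp
      finally show ?thesis .
    qed
    have D1pos: "0 \<le> D1" by (simp add: D1_def)
    have G2: "D1 * (\<epsilon> * real (trig a k)) \<le> D1 * (\<epsilon> * real t)"
      using F2 \<epsilon>pos D1pos by (intro mult_left_mono) auto
    have G3: "(K / A - \<epsilon>) * real t \<le> (K - \<epsilon>) * real t / A"
    proof -
      have "\<epsilon> / A \<le> \<epsilon>" using A1 \<epsilon>pos by (simp add: divide_le_eq mult_le_cancel_left1)
      hence "K / A - \<epsilon> \<le> (K - \<epsilon>) / A" by (simp add: diff_divide_distrib)
      hence "(K / A - \<epsilon>) * real t \<le> (K - \<epsilon>) / A * real t" by (intro mult_right_mono) auto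
      thus ?thesis by simp
    qed
    have G4: "Cst \<le> \<epsilon> * real t"
    proof -
      have "\<bar>Cst\<bar> \<le> real t * \<epsilon>" using tC \<epsilon>pos by (simp add: divide_le_eq)
      thus ?thesis by (simp add: algebra_simps)
    qed
    have Eq: "(K - \<epsilon>) * (real t - Td) / A - D1 * (\<epsilon> * real t - ln c) - ln R
            = (K - \<epsilon>) * real t / A - D1 * (\<epsilon> * real t) - Cst"
      unfolding Cst_def using Apos by (simp add: field_simps)
    have tpos: "0 < real t" using t1 by simp
    have G5: "y * real t < (K / A - (real d + 3) * \<epsilon>) * real t"
      using \<epsilon>gap tpos by (intro mult_strict_right_mono) auto
    have G6: "(K / A - (real d + 3) * \<epsilon>) * real t = (K / A - \<epsilon>) * real t - D1 * (\<epsilon> * real t) - \<epsilon> * real t"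
      by (simp add: D1_def algebra_simps)
    have "y * real t < - ln (U \<omega> t i th)"
      using F3 G1' G2 G3 G4 Eq G5 G6 by (simp add: algebra_simps)
    thus "y < - ln (U \<omega> t i th) / real t" by (simp only: pos_less_divide_eq[OF tpos])
  qed
qed

lemma dist_path: "(v, i) \<in> E ^^ dist_graph E v i"
proof -
  have "(v, i) \<in> E\<^sup>*" using conn by (simp add: strongly_connected_def)
  then obtain n where "(v, i) \<in> E ^^ n" by (auto simp: rtrancl_power)
  thus ?thesis unfolding dist_graph_def by (rule LeastI)
qed

lemma U_to_0:
  assumes g: "good \<omega>" and Hw: "H \<omega>" and th: "th \<noteq> ts"
    and ident: "\<And>p q. p \<noteq> q \<Longrightarrow> source_set l Sig p q \<noteq> {}"
  shows "(\<lambda>t. U \<omega> t i th) \<longlonglongrightarrow> 0"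
proof -
  obtain v where v: "v \<in> source_set l Sig ts th" using ident[of ts th] th by auto
  define d where "d = dist_graph E v i"
  define z where "z = KL l Sig v ts th / real a ^ Suc d"
  define y where "y = z / 2"
  have Kpos: "0 < KL l Sig v ts th" using v by (simp add: source_set_def)
  have zpos: "0 < z" using Kpos a1 unfolding z_def by (intro divide_pos_pos) auto
  have ypos: "0 < y" using zpos by (simp add: y_def)
  have yz: "y < z" using zpos by (simp add: y_def)
  have "\<exists>N. \<forall>t\<ge>N. y < - ln (U \<omega> t i th) / real t"
    by (rule rate_det[OF g Hw dist_path[of v i, folded d_def]]) (use yz in \<open>simp add: z_def\<close>)
  then obtain N where N0: "\<forall>t\<ge>N. y < - ln (U \<omega> t i th) / real t" by (elim exE)
  have N: "y < - ln (U \<omega> t i th) / real t" if "t \<ge> N" for t using N0 that by blast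
  have ub: "eventually (\<lambda>t. U \<omega> t i th \<le> exp (- y) ^ t) sequentially"
    unfolding eventually_sequentially
  proof (intro exI allI impI)
    fix t assume t: "max N 1 \<le> t"
    hence tpos: "0 < real t" by simp
    have "N \<le> t" using t by simp
    hence "y < - ln (U \<omega> t i th) / real t" by (rule N)
    hence "y * real t < - ln (U \<omega> t i th)" by (simp only: pos_less_divide_eq[OF tpos])
    hence "ln (U \<omega> t i th) < - y * real t" by simp
    hence "exp (ln (U \<omega> t i th)) < exp (- y * real t)" by (rule exp_less_mono)
    hence "U \<omega> t i th < exp (- y * real t)" using U_pos[OF g, of t i th] by simp
    also have "exp (- y * real t) = exp (- y) ^ t"
      by (subst exp_of_nat_mult[symmetric]) (simp add: mult.commute)
    finally show "U \<omega> t i th \<le> exp (- y) ^ t" by simp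
  qed
  have lim: "(\<lambda>t. exp (- y) ^ t) \<longlonglongrightarrow> 0" using ypos by (intro LIMSEQ_power_zero) auto
  show ?thesis
    by (rule tendsto_sandwich[OF _ ub tendsto_const lim], rule always_eventually, intro allI less_imp_le U_pos[OF g])
qed

lemma consistency:
  assumes g: "good \<omega>" and Hw: "H \<omega>"
    and ident: "\<And>p q. p \<noteq> q \<Longrightarrow> source_set l Sig p q \<noteq> {}"
  shows "(\<lambda>t. U \<omega> t i ts) \<longlonglongrightarrow> 1"
proof -
  have eq: "U \<omega> t i ts = 1 - (\<Sum>th\<in>UNIV - {ts}. U \<omega> t i th)" for t
    using U_sum[OF g, of t i] sum.remove[of UNIV ts "U \<omega> t i"] by simp
  have "(\<lambda>t. 1 - (\<Sum>th\<in>UNIV - {ts}. U \<omega> t i th)) \<longlonglongrightarrow> 1 - (\<Sum>th\<in>UNIV - {ts}. 0)"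
    by (intro tendsto_intros U_to_0[OF g Hw _ ident]) auto
  thus ?thesis by (simp add: eq)
qed

lemma rate:
  assumes g: "good \<omega>" and Hw: "H \<omega>" and th: "th \<noteq> ts"
    and ident: "\<And>p q. p \<noteq> q \<Longrightarrow> source_set l Sig p q \<noteq> {}"
  shows "liminf (\<lambda>t. ereal (- ln (U \<omega> t i th) / real t))
     \<ge> ereal (Max ((\<lambda>v. KL l Sig v ts th / real a ^ (dist_graph E v i + 1)) ` source_set l Sig ts th))"
proof -
  define F where "F = (\<lambda>v. KL l Sig v ts th / real a ^ (dist_graph E v i + 1))"
  have tsth: "ts \<noteq> th" using th by simp
  have ne: "source_set l Sig ts th \<noteq> {}" by (rule ident[OF tsth])
  have fin: "finite (source_set l Sig ts th)" by (rule finite_subset[OF subset_UNIV]) simp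
  have "Max (F ` source_set l Sig ts th) \<in> F ` source_set l Sig ts th"
    by (rule Max_in) (use fin ne in auto)
  then obtain v where v: "v \<in> source_set l Sig ts th" and vmax: "Max (F ` source_set l Sig ts th) = F v"
    by (elim imageE) simp
  show ?thesis unfolding F_def[symmetric] vmax
  proof (subst le_Liminf_iff, intro allI impI)
    fix z :: ereal assume z: "z < ereal (F v)"
    show "eventually (\<lambda>t. z < ereal (- ln (U \<omega> t i th) / real t)) sequentially"
    proof (cases z)
      case (real r)
      hence "r < KL l Sig v ts th / real a ^ Suc (dist_graph E v i)" using z by (simp add: F_def)
      hence "\<exists>N. \<forall>t\<ge>N. r < - ln (U \<omega> t i th) / real t" by (rule rate_det[OF g Hw dist_path])
      thus ?thesis unfolding eventually_sequentially real by simp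
    next
      case PInf thus ?thesis using z by simp
    next
      case MInf thus ?thesis by simp
    qed
  qed
qed

end

theorem theorem1:
  fixes a :: nat
    and E :: "('v::finite \<times> 'v) set"
    and l :: "'h::finite \<Rightarrow> ('v \<Rightarrow> 's) pmf"
    and Sig :: "'v \<Rightarrow> 's set"
    and th_star :: 'h
    and pi0 mu0 :: "'v \<Rightarrow> 'h \<Rightarrow> real"
  assumes a2: "a \<ge> 2"
    and Sig_fin: "\<And>i. finite (Sig i)"
    and supp: "\<And>th s i. s \<in> set_pmf (l th) \<Longrightarrow> s i \<in> Sig i"
    and lik_pos: "\<And>i th w. w \<in> Sig i \<Longrightarrow> lik l i th w > 0"
    and pi0_prob: "\<And>i. (\<Sum>th\<in>UNIV. pi0 i th) = 1"
    and mu0_prob: "\<And>i. (\<Sum>th\<in>UNIV. mu0 i th) = 1"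
    and ident: "\<And>p q. p \<noteq> q \<Longrightarrow> source_set l Sig p q \<noteq> {}"
    and conn: "strongly_connected E"
    and pi0_pos: "\<And>i th. pi0 i th > 0"
    and mu0_pos: "\<And>i th. mu0 i th > 0"
  shows "(\<forall>i. AE \<omega> in stream_space (measure_pmf (l th_star)).
            (\<lambda>t. act_belief a E l pi0 mu0 \<omega> t i th_star) \<longlonglongrightarrow> 1)
       \<and> (\<forall>i. \<forall>th. th \<noteq> th_star \<longrightarrow>
            (AE \<omega> in stream_space (measure_pmf (l th_star)).
              liminf (\<lambda>t. ereal (- ln (act_belief a E l pi0 mu0 \<omega> t i th) / real t))
              \<ge> ereal (Max ((\<lambda>v. KL l Sig v th_star th / real a ^ (dist_graph E v i + 1))
                              ` source_set l Sig th_star th))))"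
  proof -
  interpret L: learn a E l Sig th_star pi0 mu0
    apply unfold_locales
    using a2 Sig_fin supp lik_pos pi0_prob mu0_prob conn pi0_pos mu0_pos by auto
  define M where "M = stream_space (measure_pmf (l th_star))"
  have AEg: "AE \<omega> in M. L.good \<omega>"
  proof -
    have "AE \<omega> in M. stream_all (\<lambda>s. s \<in> set_pmf (l th_star)) \<omega>"
      unfolding M_def by (rule prob_space.AE_stream_all[OF prob_space_measure_pmf]) (simp_all add: AE_measure_pmf)
    thus ?thesis by (simp only: L.good_def stream_all_def)
  qed
  have AEH: "AE \<omega> in M. L.H \<omega>"
  proof -
    have "AE \<omega> in M. \<exists>N. \<forall>n\<ge>N. real n * (KL l Sig i th_star p - 1 / (real m + 1)) \<le> L.S \<omega> n i p"
      for m i p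
    proof -
      define f where "f s = L.X i p (s i)" for s
      define B where "B = (\<Sum>w\<in>Sig i. \<bar>L.X i p w\<bar>)"
      have fb: "\<bar>f s\<bar> \<le> B" if "s \<in> set_pmf (l th_star)" for s
        using L.X_bound[OF supp[OF that]] by (simp add: f_def B_def)
      have "AE \<omega> in M. eventually (\<lambda>n. real n * (measure_pmf.expectation (l th_star) f - 1 / (real m + 1))
                 \<le> (\<Sum>\<tau><n. f (\<omega> !! \<tau>))) sequentially"
      proof -
        have "(0::real) < real m + 1" using of_nat_0_le_iff[of m] by linarith
        hence ep: "(0::real) < 1 / (real m + 1)" by (rule divide_pos_pos[OF zero_less_one])
        show ?thesis unfolding M_def by (rule slln_lower[OF fb]) (simp_all add: ep)
      qed
      moreover have "measure_pmf.expectation (l th_star) f = KL l Sig i th_star p"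
        unfolding f_def by (rule L.KL_expect)
      ultimately show ?thesis by (simp add: eventually_sequentially L.S_def f_def)
    qed
    hence "AE \<omega> in M. \<forall>m i p. \<exists>N. \<forall>n\<ge>N. real n * (KL l Sig i th_star p - 1 / (real m + 1)) \<le> L.S \<omega> n i p"
      by (simp add: AE_all_countable)
    thus ?thesis by (simp add: L.H_def)
  qed
  have AE: "AE \<omega> in M. L.good \<omega> \<and> L.H \<omega>" using AEg AEH by (rule AE_conjI)
  show ?thesis
  proof (intro conjI allI impI)
    fix i
    show "AE \<omega> in stream_space (measure_pmf (l th_star)).
            (\<lambda>t. act_belief a E l pi0 mu0 \<omega> t i th_star) \<longlonglongrightarrow> 1"
      using AE unfolding M_def
      by (rule AE_mp) (auto simp: act_belief_def intro: L.consistency[OF _ _ ident])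
  next
    fix i th assume th: "th \<noteq> th_star"
    show "AE \<omega> in stream_space (measure_pmf (l th_star)).
              liminf (\<lambda>t. ereal (- ln (act_belief a E l pi0 mu0 \<omega> t i th) / real t))
              \<ge> ereal (Max ((\<lambda>v. KL l Sig v th_star th / real a ^ (dist_graph E v i + 1))
                              ` source_set l Sig th_star th))"
    proof -
      have r: "liminf (\<lambda>t. ereal (- ln (act_belief a E l pi0 mu0 \<omega> t i th) / real t))
              \<ge> ereal (Max ((\<lambda>v. KL l Sig v th_star th / real a ^ (dist_graph E v i + 1))
                              ` source_set l Sig th_star th))" if "L.good \<omega>" "L.H \<omega>" for \<omega>
        unfolding act_belief_def by (rule L.rate[OF that th ident])
      show ?thesis using AE unfolding M_def
        by (rule AE_mp) (intro AE_I2 impI, elim conjE, rule r)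
    qed
  qed
qed

end
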